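(* For every $n\ge0$ and $r\in\mathcal{Y}_n$, in the Hopf algebra $\mathcal{Y}Sym$, $$\Delta(M_r)=\sum_{r=s\backslash t}M_s\otimes M_t,$$ the sum over all pairs of trees $(s,t)$ (with $s\in\mathcal{Y}_j$, $t\in\mathcal{Y}_{n-j}$ for some $0\le j\le n$) such that $r=s\backslash t$.
   Context: $\mathcal{Y}_n$ is the set of rooted planar binary trees with $n$ internal nodes ($n+1$ leaves); $\mathcal{Y}_0=\{|\}$. For $s\in\mathcal{Y}_p,t\in\mathcal{Y}_q$, $s\vee t\in\mathcal{Y}_{p+q+1}$ has a root with left subtree $s$ and right subtree $t$; each $t\in\mathcal{Y}_n$, $n\ge1$, is uniquely $t_l\vee t_r$. The Tamari order on $\mathcal{Y}_n$ is generated by replacing a subtree $(a\vee b)\vee c$ by the larger $a\vee(b\vee c)$. $s\backslash t$ is defined by $|\backslash t=t$, $s\backslash t=s_l\vee(s_r\backslash t)$ (graft the root of $t$ onto the rightmost leaf of $s$). $\mathcal{Y}Sym$ (the graded dual of the Loday–Ronco Hopf algebra) is the graded Hopf algebra over $\mathbb{Q}$ with basis $\{F_t\}$, $t\in\bigsqcup_n\mathcal{Y}_n$, $F_t$ of degree $n$ for $t\in\mathcal{Y}_n$. Number the leaves of $t\in\mathcal{Y}_n$ by $0,\dots,n$ left to right. Splitting $t$ at leaf $i$ gives a pair $t\to(t_0,t_1)$ (the pieces left and right of the path from leaf $i$ to the root), defined recursively: $|$ splits at its unique leaf as $(|,|)$; if $t=t_l\vee t_r$ and leaf $i$ lies in $t_l$,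 where $t_l$ splits there as $(a,b)$, then $t\to(a,b\vee t_r)$; if leaf $i$ lies in $t_r$, where $t_r$ splits there as $(c,d)$, then $t\to(t_l\vee c,d)$. The coproduct is $\Delta(F_t)=\sum_{i=0}^n F_{t_0}\otimes F_{t_1}$ over these splittings. (The product, not needed here, is described by grafting pieces of divisions of $t$ onto leaves of $s$.) The monomial basis is $M_t:=\sum_{t\le s}\mu_{\mathcal{Y}_n}(t,s)F_s$, with $\mu_{\mathcal{Y}_n}$ the Möbius function of the Tamari order, equivalently $F_t=\sum_{s\ge t}M_s$. *)

theory Defs
  imports Complex_Main
begin

datatype ytree = Leaf | Node ytree ytree

text \<open>Number of internal nodes (the degree n of t in Y_n).\<close>
fun nodes :: "ytree \<Rightarrow> nat" where
  "nodes Leaf = 0"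
| "nodes (Node l r) = nodes l + nodes r + 1"

text \<open>Over-under product s \<setminus> t: graft the root of t onto the rightmost leaf of s.\<close>
fun graft :: "ytree \<Rightarrow> ytree \<Rightarrow> ytree" where
  "graft Leaf t = t"
| "graft (Node l r) t = Node l (graft r t)"

inductive tamari_step :: "ytree \<Rightarrow> ytree \<Rightarrow> bool" where
  rot: "tamari_step (Node (Node a b) c) (Node a (Node b c))"
| left: "tamari_step l l' \<Longrightarrow> tamari_step (Node l r) (Node l' r)"
| right: "tamari_step r r' \<Longrightarrow> tamari_step (Node l r) (Node l r')"

definition tamari_le :: "ytree \<Rightarrow> ytree \<Rightarrow> bool" where
  "tamari_le = tamari_step\<^sup>*\<^sup>*"

definition tamari_mobius :: "ytree \<Rightarrow> ytree \<Rightarrow> int" where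
  "tamari_mobius = (THE mu. \<forall>x y. mu x y =
     (if x = y then 1
      else if tamari_le x y then
        - (\<Sum>z\<in>{z. tamari_le x z \<and> tamari_le z y \<and> z \<noteq> y}. mu x z)
      else 0))"

text \<open>An element of YSym is represented by its coefficient function w.r.t. the
  basis (F_t); an element of YSym \<otimes> YSym by its coefficients w.r.t. (F_a \<otimes> F_b).\<close>
type_synonym ysym = "ytree \<Rightarrow> rat"
type_synonym ysym2 = "ytree \<times> ytree \<Rightarrow> rat"

definition F :: "ytree \<Rightarrow> ysym" where
  "F t = (\<lambda>s. if s = t then 1 else 0)"

definition tensor :: "ysym \<Rightarrow> ysym \<Rightarrow> ysym2" where
  "tensor f g = (\<lambda>(a, b). f a * g b)"

text \<open>Splitting t at leaf i (leaves numbered 0..nodes t from left to right).\<close>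
fun split_at :: "ytree \<Rightarrow> nat \<Rightarrow> ytree \<times> ytree" where
  "split_at Leaf i = (Leaf, Leaf)"
| "split_at (Node l r) i =
     (if i \<le> nodes l then (let (a, b) = split_at l i in (a, Node b r))
      else (let (c, d) = split_at r (i - nodes l - 1) in (Node l c, d)))"

text \<open>Coproduct, linear extension of Delta(F_t) = sum_{i=0}^{n} F_{t_0} \<otimes> F_{t_1}.
  The coefficient of F_a \<otimes> F_b in Delta(F_t) is the number of leaves i with
  split_at t i = (a,b); only trees t with nodes t = nodes a + nodes b contribute.\<close>
definition coprod :: "ysym \<Rightarrow> ysym2" where
  "coprod f = (\<lambda>(a, b). \<Sum>t\<in>{t. nodes t = nodes a + nodes b}.
       f t * of_nat (card {i. i \<le> nodes t \<and> split_at t i = (a, b)}))"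

definition M :: "ytree \<Rightarrow> ysym" where
  "M t = (\<lambda>s. if tamari_le t s then of_int (tamari_mobius t s) else 0)"

end

theory Submission
  imports Defs
begin


abbreviation le :: "ytree \<Rightarrow> ytree \<Rightarrow> bool" where "le \<equiv> tamari_le"

lemma le_refl[simp]: "le x x" by (simp add: tamari_le_def)
lemma le_trans: "le x y \<Longrightarrow> le y z \<Longrightarrow> le x z"
  unfolding tamari_le_def by (rule rtranclp_trans)
lemma step_le: "tamari_step x y \<Longrightarrow> le x y"
  unfolding tamari_le_def by simp

lemma step_nodes: "tamari_step x y \<Longrightarrow> nodes x = nodes y"
  by (induction rule: tamari_step.induct) auto
lemma le_nodes: "le x y \<Longrightarrow> nodes x = nodes y"
  unfolding tamari_le_def by (induction rule: rtranclp_induct) (auto dest: step_nodes)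

fun pot :: "ytree \<Rightarrow> nat" where
  "pot Leaf = 0"
| "pot (Node l r) = pot l + pot r + nodes r"

lemma step_pot: "tamari_step x y \<Longrightarrow> pot x < pot y"
  by (induction rule: tamari_step.induct) (auto dest: step_nodes)

lemma le_pot: "le x y \<Longrightarrow> x \<noteq> y \<Longrightarrow> pot x < pot y"
proof -
  assume "le x y" "x \<noteq> y"
  then have "tamari_step\<^sup>+\<^sup>+ x y" unfolding tamari_le_def
    by (meson rtranclpD)
  then show ?thesis by (induction rule: tranclp_induct) (auto dest: step_pot)
qed

lemma le_antisym: "le x y \<Longrightarrow> le y x \<Longrightarrow> x = y"
  using le_pot by (metis less_asym)

lemma le_NodeL: "le l l' \<Longrightarrow> le (Node l r) (Node l' r)"
  unfolding tamari_le_def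
  by (induction rule: rtranclp_induct) (auto intro: tamari_step.left rtranclp.rtrancl_into_rtrancl)
lemma le_NodeR: "le r r' \<Longrightarrow> le (Node l r) (Node l r')"
  unfolding tamari_le_def
  by (induction rule: rtranclp_induct) (auto intro: tamari_step.right rtranclp.rtrancl_into_rtrancl)
lemma le_Node: "le l l' \<Longrightarrow> le r r' \<Longrightarrow> le (Node l r) (Node l' r')"
  by (meson le_NodeL le_NodeR le_trans)
lemma le_rot: "le (Node (Node a b) c) (Node a (Node b c))"
  by (simp add: step_le tamari_step.rot)

lemma finite_T: "finite {t. nodes t = n}"
proof (induction n rule: less_induct)
  case (less n)
  show ?case
  proof (cases n)
    case 0
    then have "{t. nodes t = n} = {Leaf}" by (auto elim: nodes.elims)
    then show ?thesis by simp
  next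
    case (Suc m)
    have "{t. nodes t = n} \<subseteq> (\<lambda>(l,r). Node l r) ` ((\<Union>i\<le>m. {t. nodes t = i}) \<times> (\<Union>i\<le>m. {t. nodes t = i}))"
    proof
      fix t assume "t \<in> {t. nodes t = n}"
      then show "t \<in> (\<lambda>(l,r). Node l r) ` ((\<Union>i\<le>m. {t. nodes t = i}) \<times> (\<Union>i\<le>m. {t. nodes t = i}))"
        using Suc by (cases t) force+
    qed
    moreover have "finite ((\<Union>i\<le>m. {t. nodes t = i}) \<times> (\<Union>i\<le>m. {t. nodes t = i}))"
      using less Suc by auto
    ultimately show ?thesis by (meson finite_imageI finite_subset)
  qed
qed

definition Iv :: "ytree \<Rightarrow> ytree \<Rightarrow> ytree set" where
  "Iv x y = {z. le x z \<and> le z y}"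

lemma finite_Iv: "finite (Iv x y)"
  by (rule finite_subset[OF _ finite_T[of "nodes x"]]) (auto simp: Iv_def le_nodes)

lemma Iv_psubset1: "le x z \<Longrightarrow> le z y \<Longrightarrow> z \<noteq> y \<Longrightarrow> card (Iv x z) < card (Iv x y)"
proof (rule psubset_card_mono[OF finite_Iv])
  assume a: "le x z" "le z y" "z \<noteq> y"
  have "Iv x z \<subseteq> Iv x y" unfolding Iv_def using a(2) le_trans by auto
  moreover have "y \<notin> Iv x z" unfolding Iv_def using a le_antisym by auto
  moreover have "y \<in> Iv x y" unfolding Iv_def using a le_trans by auto
  ultimately show "Iv x z \<subset> Iv x y" by blast
qed

lemma Iv_psubset2: "le x z \<Longrightarrow> le z y \<Longrightarrow> z \<noteq> x \<Longrightarrow> card (Iv z y) < card (Iv x y)"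
proof (rule psubset_card_mono[OF finite_Iv])
  assume a: "le x z" "le z y" "z \<noteq> x"
  have "Iv z y \<subseteq> Iv x y" unfolding Iv_def using a(1) le_trans by auto
  moreover have "x \<notin> Iv z y" unfolding Iv_def using a le_antisym by auto
  moreover have "x \<in> Iv x y" unfolding Iv_def using a le_trans by auto
  ultimately show "Iv z y \<subset> Iv x y" by blast
qed

function mu :: "ytree \<Rightarrow> ytree \<Rightarrow> int" where
  "mu x y = (if x = y then 1 else if le x y then
        - (\<Sum>z\<in>{z. le x z \<and> le z y \<and> z \<noteq> y}. mu x z) else 0)"
  by auto
termination
  apply (relation "measure (\<lambda>(x,y). card (Iv x y))")
   apply simp
  apply (simp only: in_measure split: prod.splits)
  using Iv_psubset1 by blast

function nu :: "ytree \<Rightarrow> ytree \<Rightarrow> int" where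
  "nu x y = (if x = y then 1 else if le x y then
        - (\<Sum>z\<in>{z. le x z \<and> le z y \<and> z \<noteq> x}. nu z y) else 0)"
  by auto
termination
  apply (relation "measure (\<lambda>(x,y). card (Iv x y))")
   apply simp
  apply (simp only: in_measure split: prod.splits)
  using Iv_psubset2 by blast

declare mu.simps[simp del] nu.simps[simp del]

lemma mu_refl[simp]: "mu x x = 1" by (subst mu.simps) simp
lemma nu_refl[simp]: "nu x x = 1" by (subst nu.simps) simp

lemma mob_unique:
  assumes f: "\<And>x y. f x y = (if x = y then 1 else if le x y then
        - (\<Sum>z\<in>{z. le x z \<and> le z y \<and> z \<noteq> y}. f x z) else 0)"
  shows "f x y = mu x y"
proof (induction "card (Iv x y)" arbitrary: y rule: less_induct)
  case less
  have "(\<Sum>z\<in>{z. le x z \<and> le z y \<and> z \<noteq> y}. f x z) = (\<Sum>z\<in>{z. le x z \<and> le z y \<and> z \<noteq> y}. mu x z)"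
    by (rule sum.cong) (auto intro: less Iv_psubset1)
  then show ?case by (subst f, subst mu.simps) simp
qed

lemma mobius_eq: "tamari_mobius = mu"
  unfolding tamari_mobius_def
proof (rule the_equality)
  show "\<forall>x y. mu x y = (if x = y then 1 else if le x y then
        - (\<Sum>z\<in>{z. le x z \<and> le z y \<and> z \<noteq> y}. mu x z) else 0)"
    by (metis mu.simps)
next
  fix f :: "ytree \<Rightarrow> ytree \<Rightarrow> int" assume "\<forall>x y. f x y = (if x = y then 1 else if le x y then
        - (\<Sum>z\<in>{z. le x z \<and> le z y \<and> z \<noteq> y}. f x z) else 0)"
  then show "f = mu" using mob_unique[of f] by blast
qed

lemma M1: "(\<Sum>z\<in>Iv x y. mu x z) = (if x = y then 1 else 0)"
proof (cases "le x y")
  case True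
  show ?thesis
  proof (cases "x = y")
    case True
    then have "Iv x y = {x}" unfolding Iv_def using le_antisym by auto
    then show ?thesis using True by (simp add: mu.simps)
  next
    case False
    have "Iv x y = insert y {z. le x z \<and> le z y \<and> z \<noteq> y}" unfolding Iv_def using \<open>le x y\<close> by auto
    moreover have "finite {z. le x z \<and> le z y \<and> z \<noteq> y}"
      by (rule finite_subset[OF _ finite_Iv[of x y]]) (auto simp: Iv_def)
    ultimately show ?thesis using False True by (simp add: mu.simps[of x y])
  qed
next
  case False
  then have "Iv x y = {}" unfolding Iv_def using le_trans by blast
  then show ?thesis using False by auto
qed

lemma N1: "(\<Sum>z\<in>Iv x y. nu z y) = (if x = y then 1 else 0)"
proof (cases "le x y")
  case True
  show ?thesis
  proof (cases "x = y")
    case True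
    then have "Iv x y = {x}" unfolding Iv_def using le_antisym by auto
    then show ?thesis using True by (simp add: nu.simps)
  next
    case False
    have "Iv x y = insert x {z. le x z \<and> le z y \<and> z \<noteq> x}" unfolding Iv_def using \<open>le x y\<close> by auto
    moreover have "finite {z. le x z \<and> le z y \<and> z \<noteq> x}"
      by (rule finite_subset[OF _ finite_Iv[of x y]]) (auto simp: Iv_def)
    ultimately show ?thesis using False True by (simp add: nu.simps[of x y])
  qed
next
  case False
  then have "Iv x y = {}" unfolding Iv_def using le_trans by blast
  then show ?thesis using False by auto
qed

lemma mu_nu: "mu x y = nu x y"
proof -
  have "(\<Sum>w\<in>Iv x y. \<Sum>z\<in>{z. z \<in> Iv x y \<and> le w z}. mu x w * nu z y)
      = (\<Sum>z\<in>Iv x y. \<Sum>w\<in>{w. w \<in> Iv x y \<and> le w z}. mu x w * nu z y)"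
    by (rule sum.swap_restrict[OF finite_Iv finite_Iv])
  also have "\<dots> = (\<Sum>z\<in>Iv x y. (\<Sum>w\<in>Iv x z. mu x w) * nu z y)"
    apply (rule sum.cong[OF refl])
    apply (simp add: sum_distrib_right)
    apply (rule sum.cong)
    unfolding Iv_def using le_trans by auto
  also have "\<dots> = (\<Sum>z\<in>Iv x y. (if x = z then nu z y else 0))"
    by (rule sum.cong) (simp_all add: M1)
  also have "\<dots> = (if le x y then nu x y else 0)"
    using finite_Iv[of x y] by (simp add: Iv_def if_distrib sum.delta)
  also have "\<dots> = nu x y" by (simp add: nu.simps[of x y] nu.simps[of x x])
  finally have A: "(\<Sum>w\<in>Iv x y. \<Sum>z\<in>{z. z \<in> Iv x y \<and> le w z}. mu x w * nu z y) = nu x y" .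
  have "(\<Sum>w\<in>Iv x y. \<Sum>z\<in>{z. z \<in> Iv x y \<and> le w z}. mu x w * nu z y)
     = (\<Sum>w\<in>Iv x y. mu x w * (\<Sum>z\<in>Iv w y. nu z y))"
    apply (rule sum.cong[OF refl])
    apply (simp add: sum_distrib_left)
    apply (rule sum.cong)
    unfolding Iv_def using le_trans by auto
  also have "\<dots> = (\<Sum>w\<in>Iv x y. (if w = y then mu x w else 0))"
    by (rule sum.cong) (simp_all add: N1)
  also have "\<dots> = (if le x y then mu x y else 0)"
    using finite_Iv[of x y] by (simp add: Iv_def if_distrib sum.delta')
  also have "\<dots> = mu x y" by (simp add: mu.simps[of x y] mu.simps[of x x])
  finally show ?thesis using A by simp
qed

lemma M2: "(\<Sum>z\<in>Iv x y. mu z y) = (if x = y then 1 else 0)"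
  using N1 by (simp add: mu_nu)



lemma nodes_graft[simp]: "nodes (graft s u) = nodes s + nodes u"
  by (induction s) auto

lemma split_nodes: "i \<le> nodes t \<Longrightarrow> nodes (fst (split_at t i)) = i \<and> nodes (snd (split_at t i)) = nodes t - i"
proof (induction t arbitrary: i)
  case Leaf then show ?case by simp
next
  case (Node l r)
  show ?case
  proof (cases "i \<le> nodes l")
    case True
    then show ?thesis using Node.IH(1)[of i] by (auto split: prod.splits)
  next
    case False
    then show ?thesis using Node.IH(2)[of "i - nodes l - 1"] Node.prems by (auto split: prod.splits)
  qed
qed

lemma split_0: "split_at t 0 = (Leaf, t)"
  by (induction t) auto

lemma split_graft: "split_at (graft s u) (nodes s) = (s, u)"
  by (induction s) (auto simp: split_0)

lemma step_split_mono: "tamari_step t t' \<Longrightarrow>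
   le (fst (split_at t i)) (fst (split_at t' i)) \<and> le (snd (split_at t i)) (snd (split_at t' i))"
proof (induction arbitrary: i rule: tamari_step.induct)
  case (rot a b c)
  show ?case
  proof (cases "i \<le> nodes a")
    case True
    then show ?thesis by (auto split: prod.splits simp: le_rot)
  next
    case False
    show ?thesis
    proof (cases "i \<le> nodes a + nodes b + 1")
      case True
      then show ?thesis using False by (auto split: prod.splits)
    next
      case False2: False
      then show ?thesis using False by (auto split: prod.splits simp: le_rot)
    qed
  qed
next
  case (left l l' r)
  have n: "nodes l = nodes l'" using left.hyps by (rule step_nodes)
  show ?case
  proof (cases "i \<le> nodes l")
    case True
    then show ?thesis using left.IH[of i] n by (auto split: prod.splits intro: le_NodeL)
  next
    case False
    then show ?thesis using n by (auto split: prod.splits intro: le_NodeL step_le left.hyps)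
  qed
next
  case (right r r' l)
  have n: "nodes r = nodes r'" using right.hyps by (rule step_nodes)
  show ?case
  proof (cases "i \<le> nodes l")
    case True
    then show ?thesis by (auto split: prod.splits intro: le_NodeR step_le right.hyps)
  next
    case False
    then show ?thesis using right.IH[of "i - nodes l - 1"] by (auto split: prod.splits intro: le_NodeR)
  qed
qed

lemma le_split_mono: "le t t' \<Longrightarrow>
   le (fst (split_at t i)) (fst (split_at t' i)) \<and> le (snd (split_at t i)) (snd (split_at t' i))"
  unfolding tamari_le_def
proof (induction rule: rtranclp_induct)
  case base then show ?case by simp
next
  case (step y z)
  then show ?case using step_split_mono[OF step(2), of i] le_trans unfolding tamari_le_def by blast
qed

lemma step_graft1: "tamari_step s s' \<Longrightarrow> tamari_step (graft s u) (graft s' u)"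
  by (induction rule: tamari_step.induct) (auto intro: tamari_step.intros)

lemma step_graft2: "tamari_step u u' \<Longrightarrow> tamari_step (graft s u) (graft s u')"
  by (induction s) (auto intro: tamari_step.intros)

lemma graft_mono: "le s s' \<Longrightarrow> le u u' \<Longrightarrow> le (graft s u) (graft s' u')"
proof -
  assume a: "le s s'" "le u u'"
  have "le (graft s u) (graft s' u)" using a(1) unfolding tamari_le_def
    by (induction rule: rtranclp_induct) (auto intro: rtranclp.rtrancl_into_rtrancl step_graft1)
  moreover have "le (graft s' u) (graft s' u')" using a(2) unfolding tamari_le_def
    by (induction rule: rtranclp_induct) (auto intro: rtranclp.rtrancl_into_rtrancl step_graft2)
  ultimately show ?thesis using le_trans by blast
qed

lemma le_graft_Node: "le (Node (graft a b) r) (graft a (Node b r))"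
proof (induction a)
  case Leaf then show ?case by simp
next
  case (Node x y)
  have "le (Node (Node x (graft y b)) r) (Node x (Node (graft y b) r))" by (rule le_rot)
  moreover have "le (Node x (Node (graft y b) r)) (Node x (graft y (Node b r)))"
    using Node.IH(2) by (rule le_NodeR)
  ultimately show ?case using le_trans by simp
qed

lemma le_graft_split: "le t (graft (fst (split_at t i)) (snd (split_at t i)))"
proof (induction t arbitrary: i)
  case Leaf then show ?case by simp
next
  case (Node l r)
  show ?case
  proof (cases "i \<le> nodes l")
    case True
    obtain a b where ab: "split_at l i = (a, b)" by fastforce
    have "le (Node l r) (Node (graft a b) r)" using Node.IH(1)[of i] ab by (auto intro: le_NodeL)
    then have "le (Node l r) (graft a (Node b r))" using le_graft_Node le_trans by blast
    then show ?thesis using True ab by simp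
  next
    case False
    obtain c d where cd: "split_at r (i - nodes l - 1) = (c, d)" by fastforce
    have "le (Node l r) (Node l (graft c d))" using Node.IH(2)[of "i - nodes l - 1"] cd by (auto intro: le_NodeR)
    then show ?thesis using False cd by simp
  qed
qed

lemma key:
  assumes "nodes s + nodes u = nodes t"
  shows "le t (graft s u) \<longleftrightarrow> le (fst (split_at t (nodes s))) s \<and> le (snd (split_at t (nodes s))) u"
proof
  assume "le t (graft s u)"
  from le_split_mono[OF this, of "nodes s"] show "le (fst (split_at t (nodes s))) s \<and> le (snd (split_at t (nodes s))) u"
    by (simp add: split_graft)
next
  assume "le (fst (split_at t (nodes s))) s \<and> le (snd (split_at t (nodes s))) u"
  then have "le (graft (fst (split_at t (nodes s))) (snd (split_at t (nodes s)))) (graft s u)"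
    using graft_mono by blast
  then show "le t (graft s u)" using le_graft_split le_trans by blast
qed

lemma finite_G: "finite {(s, t). graft s t = r}"
proof (induction r)
  case Leaf
  have "{(s, t). graft s t = Leaf} \<subseteq> {(Leaf, Leaf)}"
    by clarify (case_tac a; simp)
  then show ?case by (rule finite_subset) simp
next
  case (Node l r)
  have "{(s, t). graft s t = Node l r} \<subseteq> insert (Leaf, Node l r) ((\<lambda>(s,t). (Node l s, t)) ` {(s, t). graft s t = r})"
    by clarify (case_tac a; auto)
  moreover have "finite (insert (Leaf, Node l r) ((\<lambda>(s,t). (Node l s, t)) ` {(s, t). graft s t = r}))"
    using Node.IH(2) by simp
  ultimately show ?case by (rule finite_subset)
qed



lemma M_eq: "M t s = (if le t s then of_int (mu t s) else 0)"
  by (simp add: M_def mobius_eq)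

lemma finite_Tle: "finite {t. nodes t = n \<and> P t}"
  by (rule finite_subset[OF _ finite_T[of n]]) auto

lemma card_split:
  assumes "nodes t = nodes a + nodes b"
  shows "card {i. i \<le> nodes t \<and> split_at t i = (a, b)} = (if split_at t (nodes a) = (a, b) then 1 else 0)"
proof -
  have "{i. i \<le> nodes t \<and> split_at t i = (a, b)} = (if split_at t (nodes a) = (a, b) then {nodes a} else {})"
  proof (cases "split_at t (nodes a) = (a, b)")
    case True
    have "i = nodes a" if "i \<le> nodes t" "split_at t i = (a, b)" for i
      using split_nodes[OF that(1)] that(2) by simp
    then show ?thesis using True assms by auto
  next
    case False
    have "i = nodes a" if "i \<le> nodes t" "split_at t i = (a, b)" for i
      using split_nodes[OF that(1)] that(2) by simp
    then show ?thesis using False assms by auto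
  qed
  then show ?thesis by simp
qed

lemma sumM2:
  assumes "nodes x = k"
  shows "(\<Sum>s\<in>{s. nodes s = k \<and> le x s}. M s a) = (if x = a then 1 else 0)"
proof -
  have "(\<Sum>s\<in>{s. nodes s = k \<and> le x s}. M s a) = (\<Sum>s\<in>Iv x a. of_int (mu s a))"
    apply (rule sum.mono_neutral_cong_right[OF finite_Tle])
    using assms by (auto simp: Iv_def M_eq le_nodes)
  also have "\<dots> = of_int (\<Sum>s\<in>Iv x a. mu s a)" by simp
  also have "\<dots> = (if x = a then 1 else 0)" by (simp add: M2)
  finally show ?thesis .
qed

lemma inversion:
  fixes h :: "ytree \<Rightarrow> rat"
  assumes "nodes r = n"
  shows "(\<Sum>t\<in>{t. nodes t = n \<and> le r t}. of_int (mu r t) * (\<Sum>r'\<in>{r'. nodes r' = n \<and> le t r'}. h r')) = h r"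
proof -
  let ?U = "{t. nodes t = n \<and> le r t}"
  have "(\<Sum>t\<in>?U. of_int (mu r t) * (\<Sum>r'\<in>{r'. nodes r' = n \<and> le t r'}. h r'))
      = (\<Sum>t\<in>?U. \<Sum>r'\<in>{r'. r' \<in> {r'. nodes r' = n} \<and> le t r'}. of_int (mu r t) * h r')"
    by (simp add: sum_distrib_left)
  also have "\<dots> = (\<Sum>r'\<in>{r'. nodes r' = n}. \<Sum>t\<in>{t. t \<in> ?U \<and> le t r'}. of_int (mu r t) * h r')"
    by (rule sum.swap_restrict[OF finite_Tle finite_T])
  also have "\<dots> = (\<Sum>r'\<in>{r'. nodes r' = n}. of_int (\<Sum>t\<in>Iv r r'. mu r t) * h r')"
  proof (rule sum.cong[OF refl])
    fix r' assume "r' \<in> {r'. nodes r' = n}"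
    have "{t. t \<in> ?U \<and> le t r'} = Iv r r'" unfolding Iv_def using assms le_nodes by auto
    then show "(\<Sum>t\<in>{t. t \<in> ?U \<and> le t r'}. of_int (mu r t) * h r') = of_int (\<Sum>t\<in>Iv r r'. mu r t) * h r'"
      by (simp add: sum_distrib_right)
  qed
  also have "\<dots> = (\<Sum>r'\<in>{r'. nodes r' = n}. if r = r' then h r' else 0)"
    by (rule sum.cong) (simp_all add: M1)
  also have "\<dots> = h r" using finite_T[of n] assms by (simp add: sum.delta)
  finally show ?thesis .
qed

lemma claimA:
  assumes "nodes t = nodes a + nodes b"
  shows "(\<Sum>r'\<in>{r'. nodes r' = nodes a + nodes b \<and> le t r'}. \<Sum>(s, u)\<in>{(s, u). graft s u = r'}. M s a * M u b)
       = (if split_at t (nodes a) = (a, b) then 1 else 0)"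
proof -
  define n where "n = nodes a + nodes b"
  define k where "k = nodes a"
  define t0 where "t0 = fst (split_at t k)"
  define t1 where "t1 = snd (split_at t k)"
  have kn: "k \<le> nodes t" using assms k_def by simp
  have n0: "nodes t0 = k" and n1: "nodes t1 = nodes b"
    using split_nodes[OF kn] assms unfolding t0_def t1_def k_def by auto
  let ?f = "\<lambda>(s, u). M s a * M u b"
  let ?S = "{(s, u). le t (graft s u)}"
  have finS: "finite ?S"
  proof (rule finite_subset)
    show "?S \<subseteq> (\<Union>i\<le>n. {s. nodes s = i}) \<times> (\<Union>i\<le>n. {s. nodes s = i})"
      using assms le_nodes unfolding n_def by fastforce
    show "finite ((\<Union>i\<le>n. {s. nodes s = i}) \<times> (\<Union>i\<le>n. {s. nodes s = i}))"
      using finite_T by auto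
  qed
  have "(\<Sum>r'\<in>{r'. nodes r' = n \<and> le t r'}. \<Sum>(s, u)\<in>{(s, u). graft s u = r'}. M s a * M u b)
      = (\<Sum>r'\<in>{r'. nodes r' = n \<and> le t r'}. sum ?f {x. x \<in> ?S \<and> case_prod graft x = r'})"
    by (rule sum.cong[OF refl]) (rule sum.cong, auto)
  also have "\<dots> = sum ?f ?S"
    by (rule sum.group[OF finS finite_Tle]) (auto simp: n_def assms dest: le_nodes)
  also have "\<dots> = sum ?f ({s. nodes s = k \<and> le t0 s} \<times> {u. nodes u = nodes b \<and> le t1 u})"
  proof (rule sum.mono_neutral_right[OF finS])
    show "{s. nodes s = k \<and> le t0 s} \<times> {u. nodes u = nodes b \<and> le t1 u} \<subseteq> ?S"
      using key[of _ _ t] assms unfolding t0_def t1_def k_def by auto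
    show "\<forall>i\<in>?S - {s. nodes s = k \<and> le t0 s} \<times> {u. nodes u = nodes b \<and> le t1 u}. ?f i = 0"
    proof
      fix x assume x: "x \<in> ?S - {s. nodes s = k \<and> le t0 s} \<times> {u. nodes u = nodes b \<and> le t1 u}"
      obtain s u where su: "x = (s, u)" by fastforce
      show "?f x = 0"
      proof (rule ccontr)
        assume "?f x \<noteq> 0"
        then have "le s a" "le u b" using su by (auto simp: M_eq split: if_splits)
        then have "nodes s = k" "nodes u = nodes b" using le_nodes k_def by auto
        then have "nodes s = nodes a" using k_def by simp
        then show False using x su key[of s u t] assms \<open>nodes u = nodes b\<close> unfolding t0_def t1_def k_def by auto
      qed
    qed
  qed
  also have "\<dots> = (\<Sum>s\<in>{s. nodes s = k \<and> le t0 s}. M s a) * (\<Sum>u\<in>{u. nodes u = nodes b \<and> le t1 u}. M u b)"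
    by (simp add: sum_product sum.cartesian_product)
  also have "\<dots> = (if split_at t (nodes a) = (a, b) then 1 else 0)"
    using sumM2[OF n0, of a] sumM2[OF n1, of b] unfolding t0_def t1_def k_def
    by (simp add: prod_eq_iff)
  finally show ?thesis unfolding n_def .
qed

theorem theorem5p1:
  fixes r :: ytree
  shows "coprod (M r) =
    (\<lambda>p. \<Sum>(s, t)\<in>{(s, t). graft s t = r}. tensor (M s) (M t) p)"
proof
  fix p :: "ytree \<times> ytree"
  obtain a b where p: "p = (a, b)" by fastforce
  define n where "n = nodes a + nodes b"
  define R where "R r' = (\<Sum>(s, u)\<in>{(s, u). graft s u = r'}. M s a * M u b)" for r'
  have rhs: "(\<Sum>(s, t)\<in>{(s, t). graft s t = r}. tensor (M s) (M t) p) = R r"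
    unfolding R_def p tensor_def by simp
  have lhs: "coprod (M r) p = (\<Sum>t\<in>{t. nodes t = n}. M r t * (if split_at t (nodes a) = (a, b) then 1 else 0))"
    unfolding coprod_def p n_def
  proof (simp only: prod.case, rule sum.cong[OF refl])
    fix t assume "t \<in> {t. nodes t = nodes a + nodes b}"
    then have nt: "nodes t = nodes a + nodes b" by simp
    then show "M r t * of_nat (card {i. i \<le> nodes t \<and> split_at t i = (a, b)})
       = M r t * (if split_at t (nodes a) = (a, b) then 1 else 0)"
      by (subst card_split[OF nt]) simp
  qed
  show "coprod (M r) p = (\<Sum>(s, t)\<in>{(s, t). graft s t = r}. tensor (M s) (M t) p)"
  proof (cases "nodes r = n")
    case False
    have "coprod (M r) p = 0" unfolding lhs
      by (rule sum.neutral) (use False le_nodes in \<open>auto simp: M_eq\<close>)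
    moreover have "R r = 0" unfolding R_def
    proof (rule sum.neutral, rule ballI)
      fix x assume "x \<in> {(s, u). graft s u = r}"
      then obtain s u where x: "x = (s, u)" "graft s u = r" by blast
      have "M s a * M u b = 0" using False le_nodes x(2) unfolding n_def
        by (auto simp: M_eq)
      then show "(case x of (s, u) \<Rightarrow> M s a * M u b) = 0" using x by simp
    qed
    ultimately show ?thesis using rhs by simp
  next
    case True
    have "coprod (M r) p = (\<Sum>t\<in>{t. nodes t = n \<and> le r t}. of_int (mu r t) * (if split_at t (nodes a) = (a, b) then 1 else 0))"
      unfolding lhs
      by (rule sum.mono_neutral_cong_right[OF finite_T]) (auto simp: M_eq)
    also have "\<dots> = (\<Sum>t\<in>{t. nodes t = n \<and> le r t}. of_int (mu r t) * (\<Sum>r'\<in>{r'. nodes r' = n \<and> le t r'}. R r'))"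
      by (rule sum.cong[OF refl]) (simp add: claimA n_def R_def)
    also have "\<dots> = R r" by (rule inversion[OF True])
    finally show ?thesis using rhs by simp
  qed
qed

end
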